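(* Let $A$ be a ${}^\lambda\mathrm{H}_t(m,n;s,k)$ which is simple with respect to a choice of simple orderings of its rows and of its columns. Then (1) there exists a cyclic $s$-cycle decomposition of ${}^\lambda K_{(\frac{2ms}{\lambda t}+1)\times t}$, and (2) there exists a cyclic $k$-cycle decomposition of ${}^\lambda K_{(\frac{2nk}{\lambda t}+1)\times t}$.
   Context: Let $m,n,s,k,\lambda,t$ be positive integers with $t$ dividing $\frac{2nk}{\lambda}$, let $v=\frac{2nk}{\lambda}+t$ and let $J$ be the subgroup of $\mathbb{Z}_v$ of order $t$. A ${}^\lambda\mathrm{H}_t(m,n;s,k)$ is an $m\times n$ partially filled array with entries in $\mathbb{Z}_v$ such that: (a) each row has exactly $s$ and each column exactly $k$ filled cells; (b) the multiset $\{\pm x: x$ an entry of a filled cell$\}$ contains each element of $\mathbb{Z}_v\setminus J$ exactly $\lambda$ times and no element of $J$; (c) every row and column sums to $0$ in $\mathbb{Z}_v$. An ordering of a row/column (list of entries along a cyclic permutation of its filled cells) is simple if its partial sums are pairwise distinct; the array is simple if each row and column admits a simple ordering. $K_{q\times r}$ is the complete multipartite graph with $q$ parts of size $r$ and ${}^\lambda\Gamma$ is the multigraph obtained from $\Gamma$ by repeating each edge $\lambda$ times. A cyclic $\ell$-cycle decomposition of a multigraph with vertex set identified with $\mathbb{Z}_N$ is a set of $\ell$-cycles whose edge multisets partition the edge multiset, and which is closed under translation by every element of $\mathbb{Z}_N$. *)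

theory Defs
  imports Main "HOL-Library.Multiset"
begin

text \<open>A partially filled m x n array: A i j = None means the cell is empty.
  Only cells with i < m and j < n are considered. Entries of Z_v are represented
  by integers in {0..<v}.\<close>

definition row_cells :: "nat \<Rightarrow> (nat \<Rightarrow> nat \<Rightarrow> int option) \<Rightarrow> nat \<Rightarrow> nat set" where
  "row_cells n A i = {j. j < n \<and> A i j \<noteq> None}"

definition col_cells :: "nat \<Rightarrow> (nat \<Rightarrow> nat \<Rightarrow> int option) \<Rightarrow> nat \<Rightarrow> nat set" where
  "col_cells m A j = {i. i < m \<and> A i j \<noteq> None}"

definition filled_cells :: "nat \<Rightarrow> nat \<Rightarrow> (nat \<Rightarrow> nat \<Rightarrow> int option) \<Rightarrow> (nat \<times> nat) set" where
  "filled_cells m n A = {(i, j). i < m \<and> j < n \<and> A i j \<noteq> None}"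

definition subgrp_J :: "nat \<Rightarrow> nat \<Rightarrow> int set" where
  "subgrp_J v t = {y. 0 \<le> y \<and> y < int v \<and> int (v div t) dvd y}"

definition is_heffter :: "nat \<Rightarrow> nat \<Rightarrow> nat \<Rightarrow> nat \<Rightarrow> nat \<Rightarrow> nat \<Rightarrow> (nat \<Rightarrow> nat \<Rightarrow> int option) \<Rightarrow> bool" where
  "is_heffter lam t m n s k A \<longleftrightarrow>
    (let v = 2 * n * k div lam + t in
      (\<forall>(i, j) \<in> filled_cells m n A. 0 \<le> the (A i j) \<and> the (A i j) < int v) \<and>
      (\<forall>i < m. card (row_cells n A i) = s) \<and>
      (\<forall>j < n. card (col_cells m A j) = k) \<and>
      (\<forall>y. 0 \<le> y \<and> y < int v \<longrightarrow>
         card {(i, j) \<in> filled_cells m n A. the (A i j) mod int v = y}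
       + card {(i, j) \<in> filled_cells m n A. (- the (A i j)) mod int v = y}
         = (if y \<in> subgrp_J v t then 0 else lam)) \<and>
      (\<forall>i < m. (\<Sum>j \<in> row_cells n A i. the (A i j)) mod int v = 0) \<and>
      (\<forall>j < n. (\<Sum>i \<in> col_cells m A j. the (A i j)) mod int v = 0))"

definition simple_seq :: "nat \<Rightarrow> int list \<Rightarrow> bool" where
  "simple_seq v es \<longleftrightarrow> inj_on (\<lambda>h. sum_list (take h es) mod int v) {1..length es}"

definition is_simple_array :: "nat \<Rightarrow> nat \<Rightarrow> nat \<Rightarrow> nat \<Rightarrow> nat \<Rightarrow> (nat \<Rightarrow> nat \<Rightarrow> int option) \<Rightarrow> bool" where
  "is_simple_array lam t m n k A \<longleftrightarrow>
    (let v = 2 * n * k div lam + t in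
      (\<forall>i < m. \<exists>xs. distinct xs \<and> set xs = row_cells n A i \<and>
                     simple_seq v (map (\<lambda>j. the (A i j)) xs)) \<and>
      (\<forall>j < n. \<exists>xs. distinct xs \<and> set xs = col_cells m A j \<and>
                     simple_seq v (map (\<lambda>i. the (A i j)) xs)))"

definition cycle_edges :: "int list \<Rightarrow> int set multiset" where
  "cycle_edges xs = mset (map (\<lambda>h. {xs ! h, xs ! ((h + 1) mod length xs)}) [0..<length xs])"

text \<open>Edges of K_{q x r} on vertex set Z_{qr}; the parts are the cosets of the
  subgroup of order r, i.e. residue classes modulo q.\<close>
definition multipartite_edges :: "nat \<Rightarrow> nat \<Rightarrow> int set set" where
  "multipartite_edges q r = {{x, y} | x y. 0 \<le> x \<and> x < int (q * r) \<and> 0 \<le> y \<and> y < int (q * r)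
        \<and> x \<noteq> y \<and> \<not> int q dvd (x - y)}"

text \<open>D is a cyclic l-cycle decomposition of ^lambda K_{q x r} (vertices Z_{qr}).
  D is a collection (multiset) of l-cycles, each represented by its edge multiset.\<close>
definition cyclic_cycle_decomp :: "nat \<Rightarrow> nat \<Rightarrow> nat \<Rightarrow> nat \<Rightarrow> int set multiset multiset \<Rightarrow> bool" where
  "cyclic_cycle_decomp l lam q r D \<longleftrightarrow>
    (let N = q * r in
      (\<forall>C \<in># D. \<exists>xs. length xs = l \<and> distinct xs \<and> set xs \<subseteq> {0..<int N} \<and> C = cycle_edges xs) \<and>
      (\<forall>e. count (\<Sum>\<^sub># D) e = (if e \<in> multipartite_edges q r then lam else 0)) \<and>
      (\<forall>g \<in> {0..<int N}. image_mset (image_mset (image (\<lambda>x. (x + g) mod int N))) D = D))"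

end

theory Submission
  imports Defs "HOL-Library.Multiset"
begin



lemma count_map_upt: "count (mset (map F [0..<l])) e = (\<Sum>h<l. if F h = e then 1 else 0)"
  by (induct l) auto

lemma modeq1:
  fixes c g u :: int and N :: nat
  assumes "N > 0" "0 \<le> g" "g < int N" "0 \<le> u" "u < int N"
  shows "((c+g) mod int N = u) \<longleftrightarrow> g = (u - c) mod int N"
proof
  assume h: "(c+g) mod int N = u"
  have "(u - c) mod int N = ((c+g) mod int N - c) mod int N" using h by simp
  also have "\<dots> = (c + g - c) mod int N" by (simp add: mod_diff_left_eq)
  also have "\<dots> = g" using assms by simp
  finally show "g = (u - c) mod int N" by simp
next
  assume h: "g = (u - c) mod int N"
  have "(c+g) mod int N = (c + (u - c)) mod int N" using h by (simp add: mod_add_right_eq)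
  then show "(c+g) mod int N = u" using assms by simp
qed

lemma modeq2:
  fixes a u w :: int and N :: nat
  assumes "N > 0" "0 \<le> w" "w < int N"
  shows "((u + a) mod int N = w) \<longleftrightarrow> a mod int N = (w - u) mod int N"
proof
  assume h: "(u + a) mod int N = w"
  have "(w - u) mod int N = ((u + a) mod int N - u) mod int N" using h by simp
  also have "\<dots> = (u + a - u) mod int N" by (simp add: mod_diff_left_eq)
  finally show "a mod int N = (w - u) mod int N" by simp
next
  assume h: "a mod int N = (w - u) mod int N"
  have "(u + a) mod int N = (u + a mod int N) mod int N" by (simp add: mod_add_right_eq)
  also have "\<dots> = (u + (w - u)) mod int N" using h by (simp add: mod_add_right_eq)
  finally show "(u + a) mod int N = w" using assms by simp
qed

lemma key:
  fixes c a g u w :: int and N :: nat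
  assumes "N > 0" "g \<in> {0..<int N}" "0 \<le> u" "u < int N" "0 \<le> w" "w < int N"
  shows "((c+g) mod int N = u \<and> (c+a+g) mod int N = w) \<longleftrightarrow> (g = (u - c) mod int N \<and> a mod int N = (w - u) mod int N)"
proof -
  have "(c+a+g) mod int N = ((c+g) mod int N + a) mod int N" by (metis mod_add_left_eq add.commute add.left_commute)
  then show ?thesis using modeq1[of N g u c] modeq2[of N w "(c+g) mod int N" a] assms by auto
qed


lemma neg_mod: "(a mod int N = (x-y) mod int N) \<longleftrightarrow> ((-a) mod int N = (y-x) mod int N)"
proof
  assume h: "a mod int N = (x-y) mod int N"
  have "(-a) mod int N = (- (a mod int N)) mod int N" by (simp add: mod_minus_eq)
  also have "\<dots> = (- ((x-y) mod int N)) mod int N" using h by simp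
  also have "\<dots> = (-(x-y)) mod int N" by (simp add: mod_minus_eq)
  finally show "(-a) mod int N = (y-x) mod int N" by simp
next
  assume h: "(-a) mod int N = (y-x) mod int N"
  have "a mod int N = (- ((-a) mod int N)) mod int N" by (simp add: mod_minus_eq)
  also have "\<dots> = (- ((y-x) mod int N)) mod int N" using h by simp
  also have "\<dots> = (-(y-x)) mod int N" by (simp add: mod_minus_eq)
  finally show "a mod int N = (x-y) mod int N" by simp
qed



lemma image_mset_sum: "image_mset f (sum F A) = sum (\<lambda>a. image_mset f (F a)) A"
  by (induct A rule: infinite_finite_induct) simp_all

lemma sum_mset_sum: "sum_mset (sum F A) = sum (\<lambda>a. sum_mset (F a)) A"
  by (induct A rule: infinite_finite_induct) simp_all

lemma suc_mod_lt: "h < (l::nat) \<Longrightarrow> Suc h mod l < l" by simp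

lemma if_disj_nat: "\<not> (P \<and> Q) \<Longrightarrow> (if P \<or> Q then 1 else 0) = (if P then 1 else 0) + (if Q then (1::nat) else 0)"
  by auto

lemma cycle_edges_map: "cycle_edges (map f xs) = image_mset (image f) (cycle_edges xs)"
  unfolding cycle_edges_def
  apply (simp add: multiset.map_comp o_def)
  apply (rule image_mset_cong)
  apply (simp add: suc_mod_lt)
  done

lemma count_cycle_edges: "count (cycle_edges xs) e =
   (\<Sum>h<length xs. if {xs ! h, xs ! ((h + 1) mod length xs)} = e then 1 else 0)"
  unfolding cycle_edges_def by (rule count_map_upt)

lemma shift_shift: "N > 0 \<Longrightarrow> ((x + g) mod int N + g') mod int N = (x + (g + g') mod int N) mod int N"
  by (simp add: mod_simps add.assoc)

lemma bij_shift: "N > 0 \<Longrightarrow> bij_betw (\<lambda>g. (g + g') mod int N) {0..<int N} {0..<int N}"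
  apply (rule bij_betw_byWitness[where f'="\<lambda>g. (g - g') mod int N"])
  apply (auto simp: mod_simps)
  done

lemma count_g:
  fixes c a x y :: int and N :: nat
  assumes "N > 0" "0 \<le> x" "x < int N" "0 \<le> y" "y < int N" "x \<noteq> y"
  shows "(\<Sum>g\<in>{0..<int N}. if {(c+g) mod int N, (c+a+g) mod int N} = {x,y} then 1 else (0::nat)) =
     (if a mod int N = (y-x) mod int N then 1 else 0) + (if a mod int N = (x-y) mod int N then 1 else 0)"
proof -
  note key = key[OF assms(1)]
  have pt: "(if {(c+g) mod int N, (c+a+g) mod int N} = {x,y} then 1 else (0::nat)) =
     (if g = (x - c) mod int N \<and> a mod int N = (y - x) mod int N then 1 else 0) +
     (if g = (y - c) mod int N \<and> a mod int N = (x - y) mod int N then 1 else 0)"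
    if g: "g \<in> {0..<int N}" for g
  proof -
    let ?u = "(c+g) mod int N" and ?w = "(c+a+g) mod int N"
    have e: "({?u, ?w} = {x,y}) = ((?u = x \<and> ?w = y) \<or> (?u = y \<and> ?w = x))"
      by (rule doubleton_eq_iff)
    have ex: "\<not> ((?u = x \<and> ?w = y) \<and> (?u = y \<and> ?w = x))" using assms by auto
    have "(if {?u, ?w} = {x,y} then 1 else (0::nat)) = (if ?u = x \<and> ?w = y then 1 else 0) + (if ?u = y \<and> ?w = x then 1 else 0)"
      by (subst e, rule if_disj_nat[OF ex])
    also have "\<dots> = (if g = (x - c) mod int N \<and> a mod int N = (y - x) mod int N then 1 else 0) +
     (if g = (y - c) mod int N \<and> a mod int N = (x - y) mod int N then 1 else 0)"
      using key[OF g, of x y] key[OF g, of y x] assms by simp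
    finally show ?thesis .
  qed
  have "(\<Sum>g\<in>{0..<int N}. if {(c+g) mod int N, (c+a+g) mod int N} = {x,y} then 1 else (0::nat)) =
     (\<Sum>g\<in>{0..<int N}. (if g = (x - c) mod int N \<and> a mod int N = (y - x) mod int N then 1 else 0) +
     (if g = (y - c) mod int N \<and> a mod int N = (x - y) mod int N then 1 else 0))"
    using pt by (rule sum.cong[OF refl])
  also have "\<dots> = (\<Sum>g\<in>{0..<int N}. (if g = (x - c) mod int N \<and> a mod int N = (y - x) mod int N then 1 else 0)) +
     (\<Sum>g\<in>{0..<int N}. (if g = (y - c) mod int N \<and> a mod int N = (x - y) mod int N then 1 else 0))"
    by (rule sum.distrib)
  also have "(\<Sum>g\<in>{0..<int N}. (if g = (x - c) mod int N \<and> a mod int N = (y - x) mod int N then 1 else (0::nat)))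
     = (if a mod int N = (y - x) mod int N then 1 else 0)"
    using assms by (cases "a mod int N = (y - x) mod int N") (simp_all add: sum.delta')
  also have "(\<Sum>g\<in>{0..<int N}. (if g = (y - c) mod int N \<and> a mod int N = (x - y) mod int N then 1 else (0::nat)))
     = (if a mod int N = (x - y) mod int N then 1 else 0)"
    using assms by (cases "a mod int N = (x - y) mod int N") (simp_all add: sum.delta')
  finally show ?thesis .
qed



lemma general:
  fixes N q r l lam :: nat and I :: "'i set" and es :: "'i \<Rightarrow> int list"
  assumes Nqr: "N = q*r" and Npos: "N > 0"
  and fin: "finite I"
  and len: "\<And>i. i\<in>I \<Longrightarrow> length (es i) = l"
  and simp: "\<And>i. i\<in>I \<Longrightarrow> simple_seq N (es i)"
  and sum0: "\<And>i. i\<in>I \<Longrightarrow> sum_list (es i) mod int N = 0"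
  and cnt: "\<And>d. 0 \<le> d \<Longrightarrow> d < int N \<Longrightarrow> (\<Sum>i\<in>I. \<Sum>h<l. (if es i ! h mod int N = d then 1 else 0) + (if (- (es i ! h)) mod int N = d then 1 else 0)) = (if int q dvd d then 0 else lam)"
  shows "\<exists>D. cyclic_cycle_decomp l lam q r D"
proof -
  define V where "V i h = sum_list (take h (es i)) mod int N" for i h
  define xs where "xs i = map (V i) [0..<l]" for i
  define sh where "sh g ys = map (\<lambda>x. (x+g) mod int N) ys" for g ys
  define D where "D = (\<Sum>i\<in>I. \<Sum>g\<in>{0..<int N}. {# cycle_edges (sh g (xs i)) #})"
  have nz: "es i ! h mod int N \<noteq> 0" if "i \<in> I" "h < l" for i h
  proof -
    have "(\<Sum>i\<in>I. \<Sum>h<l. (if es i ! h mod int N = 0 then 1 else 0) + (if (- (es i ! h)) mod int N = 0 then 1 else (0::nat))) = 0"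
      using cnt[of 0] Npos by simp
    then have "(\<Sum>h<l. (if es i ! h mod int N = 0 then 1 else 0) + (if (- (es i ! h)) mod int N = 0 then 1 else (0::nat))) = 0"
      using fin that by (simp add: sum_eq_0_iff)
    then have "(if es i ! h mod int N = 0 then 1 else (0::nat)) = 0" using that by (simp add: sum_eq_0_iff)
    then show ?thesis by (simp split: if_splits)
  qed
  have Vrange: "0 \<le> V i h \<and> V i h < int N" for i h
    unfolding V_def using Npos by simp
  have V0: "V i 0 = 0" for i unfolding V_def by simp
  have Vstep: "V i (Suc h mod l) = (V i h + es i ! h) mod int N" if "i \<in> I" "h < l" for i h
  proof (cases "Suc h < l")
    case True
    have "take (Suc h) (es i) = take h (es i) @ [es i ! h]"
      using that len by (simp add: take_Suc_conv_app_nth)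
    then show ?thesis using True unfolding V_def by (simp add: mod_add_left_eq)
  next
    case False
    then have l: "l = Suc h" using that by simp
    have "take (Suc h) (es i) = take h (es i) @ [es i ! h]"
      using that len by (simp add: take_Suc_conv_app_nth)
    moreover have "take (Suc h) (es i) = es i" using len[OF that(1)] l by simp
    ultimately have ee: "es i = take h (es i) @ [es i ! h]" by simp
    have "sum_list (es i) = sum_list (take h (es i) @ [es i ! h])" using ee by (rule arg_cong)
    also have "\<dots> = sum_list (take h (es i)) + es i ! h" by simp
    finally have "sum_list (es i) = sum_list (take h (es i)) + es i ! h" .
    then show ?thesis using l sum0[OF that(1)] unfolding V_def by (simp add: mod_add_left_eq)
  qed
  have Vinj: "inj_on (V i) {0..<l}" if "i \<in> I" for i
  proof
    fix h1 h2 assume h1: "h1 \<in> {0..<l}" and h2: "h2 \<in> {0..<l}" and eq: "V i h1 = V i h2"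
    define f where "f h = sum_list (take h (es i)) mod int N" for h
    have injf: "inj_on f {1..l}" using simp[OF that] len[OF that] unfolding simple_seq_def f_def by simp
    have Vf: "V i h = f (if h = 0 then l else h)" if "h < l" for h
    proof (cases "h = 0")
      case True
      then show ?thesis using sum0[OF \<open>i \<in> I\<close>] len[OF \<open>i \<in> I\<close>] unfolding V_def f_def by simp
    qed (simp add: V_def f_def)
    have "f (if h1 = 0 then l else h1) = f (if h2 = 0 then l else h2)"
      using Vf[of h1] Vf[of h2] h1 h2 eq by simp
    moreover have m1: "(if h1 = 0 then l else h1) \<in> {1..l}" using h1 by auto
    moreover have m2: "(if h2 = 0 then l else h2) \<in> {1..l}" using h2 by auto
    ultimately have "(if h1 = 0 then l else h1) = (if h2 = 0 then l else h2)"
      by (rule inj_onD[OF injf])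
    then show "h1 = h2" using h1 h2 by (auto split: if_splits)
  qed
  have cyc: "\<exists>ys. length ys = l \<and> distinct ys \<and> set ys \<subseteq> {0..<int N} \<and> C = cycle_edges ys"
    if "C = cycle_edges (sh g (xs i))" "i \<in> I" for C g i
  proof (intro exI conjI)
    show "length (sh g (xs i)) = l" unfolding sh_def xs_def by simp
    show "set (sh g (xs i)) \<subseteq> {0..<int N}" unfolding sh_def using Npos by auto
    have "distinct (xs i)" unfolding xs_def using Vinj[OF that(2)] by (simp add: distinct_map)
    moreover have "inj_on (\<lambda>x. (x+g) mod int N) (set (xs i))"
    proof
      fix a b assume "a \<in> set (xs i)" "b \<in> set (xs i)" "(a+g) mod int N = (b+g) mod int N"
      then have "a mod int N = b mod int N" by (metis add_diff_cancel_right' mod_diff_left_eq)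
      moreover have "a mod int N = a" "b mod int N = b"
        using \<open>a \<in> set (xs i)\<close> \<open>b \<in> set (xs i)\<close> Vrange unfolding xs_def by auto
      ultimately show "a = b" by simp
    qed
    ultimately show "distinct (sh g (xs i))" unfolding sh_def by (simp add: distinct_map)
  qed (use that in simp)
  have shnth: "sh g (xs i) ! h = (V i h + g) mod int N" if "h < l" for g i h
    using that unfolding sh_def xs_def by simp
  have edge: "{sh g (xs i) ! h, sh g (xs i) ! ((h + 1) mod length (sh g (xs i)))} =
      {(V i h + g) mod int N, (V i h + es i ! h + g) mod int N}" if "i \<in> I" "h < l" for g i h
  proof -
    have "length (sh g (xs i)) = l" unfolding sh_def xs_def by simp
    moreover have "(V i (Suc h mod l) + g) mod int N = (V i h + es i ! h + g) mod int N"
      using Vstep[OF that] by (simp add: mod_add_left_eq)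
    ultimately show ?thesis using shnth that by simp
  qed
  have shift: "image_mset (image (\<lambda>x. (x + g') mod int N)) (cycle_edges (sh g (xs i))) =
      cycle_edges (sh ((g + g') mod int N) (xs i))" for g g' i
  proof -
    have "map (\<lambda>x. (x + g') mod int N) (sh g (xs i)) = sh ((g + g') mod int N) (xs i)"
      unfolding sh_def using shift_shift[OF Npos] by simp
    then show ?thesis by (metis cycle_edges_map)
  qed
  have inv: "image_mset (image_mset (image (\<lambda>x. (x + g') mod int N))) D = D" if "g' \<in> {0..<int N}" for g'
  proof -
    have "image_mset (image_mset (image (\<lambda>x. (x + g') mod int N))) D =
      (\<Sum>i\<in>I. \<Sum>g\<in>{0..<int N}. {# cycle_edges (sh ((g + g') mod int N) (xs i)) #})"
      unfolding D_def by (simp add: image_mset_sum shift)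
    also have "\<dots> = D" unfolding D_def
    proof (rule sum.cong[OF refl])
      fix i
      show "(\<Sum>g\<in>{0..<int N}. {# cycle_edges (sh ((g + g') mod int N) (xs i)) #}) =
            (\<Sum>g\<in>{0..<int N}. {# cycle_edges (sh g (xs i)) #})"
        using sum.reindex_bij_betw[OF bij_shift[OF Npos, of g'], of "\<lambda>g. {# cycle_edges (sh g (xs i)) #}"] by simp
    qed
    finally show ?thesis .
  qed
  have count: "count (\<Sum>\<^sub># D) e = (\<Sum>i\<in>I. \<Sum>h<l. \<Sum>g\<in>{0..<int N}.
       if {(V i h + g) mod int N, (V i h + es i ! h + g) mod int N} = e then 1 else 0)" for e
  proof -
    have "count (\<Sum>\<^sub># D) e = (\<Sum>i\<in>I. \<Sum>g\<in>{0..<int N}. count (cycle_edges (sh g (xs i))) e)"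
      unfolding D_def by (simp add: sum_mset_sum count_sum)
    also have "\<dots> = (\<Sum>i\<in>I. \<Sum>g\<in>{0..<int N}. \<Sum>h<l.
       if {(V i h + g) mod int N, (V i h + es i ! h + g) mod int N} = e then 1 else 0)"
    proof (intro sum.cong refl)
      fix i g assume "i \<in> I"
      have "length (sh g (xs i)) = l" unfolding sh_def xs_def by simp
      then show "count (cycle_edges (sh g (xs i))) e = (\<Sum>h<l.
       if {(V i h + g) mod int N, (V i h + es i ! h + g) mod int N} = e then 1 else 0)"
        unfolding count_cycle_edges using edge[OF \<open>i \<in> I\<close>] by (intro sum.cong) auto
    qed
    also have "\<dots> = (\<Sum>i\<in>I. \<Sum>h<l. \<Sum>g\<in>{0..<int N}.
       if {(V i h + g) mod int N, (V i h + es i ! h + g) mod int N} = e then 1 else 0)"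
      by (intro sum.cong refl sum.swap)
    finally show ?thesis .
  qed
  have mem: "C \<in># D \<Longrightarrow> \<exists>i\<in>I. \<exists>g. C = cycle_edges (sh g (xs i))" for C
    unfolding D_def using fin by (auto simp: set_mset_sum)
  have cnteq: "count (\<Sum>\<^sub># D) e = (if e \<in> multipartite_edges q r then lam else 0)" for e
  proof (cases "\<exists>x y. e = {x,y} \<and> 0 \<le> x \<and> x < int N \<and> 0 \<le> y \<and> y < int N \<and> x \<noteq> y")
    case True
    then obtain x y where e: "e = {x,y}" and xy: "0 \<le> x" "x < int N" "0 \<le> y" "y < int N" "x \<noteq> y" by blast
    define d where "d = (y - x) mod int N"
    have "count (\<Sum>\<^sub># D) e = (\<Sum>i\<in>I. \<Sum>h<l. (if es i ! h mod int N = (y-x) mod int N then 1 else 0) + (if es i ! h mod int N = (x-y) mod int N then 1 else 0))"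
      unfolding count e using count_g[OF Npos xy] by simp
    also have "\<dots> = (\<Sum>i\<in>I. \<Sum>h<l. (if es i ! h mod int N = d then 1 else 0) + (if (- (es i ! h)) mod int N = d then 1 else 0))"
      unfolding d_def using neg_mod by simp
    also have "\<dots> = (if int q dvd d then 0 else lam)"
      using cnt[of d] Npos unfolding d_def by simp
    also have "(int q dvd d) = (int q dvd (x - y))"
    proof -
      have "int q dvd int N" using Nqr by simp
      then have "(int q dvd d) = (int q dvd (y - x))" unfolding d_def by (simp add: dvd_mod_iff)
      also have "\<dots> = (int q dvd (x - y))" by (metis dvd_diff_commute)
      finally show ?thesis .
    qed
    also have "(int q dvd (x - y)) = (e \<notin> multipartite_edges q r)"
    proof
      assume "int q dvd (x - y)"
      then show "e \<notin> multipartite_edges q r" unfolding multipartite_edges_def e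
        by (auto simp: doubleton_eq_iff dvd_diff_commute)
    next
      assume "e \<notin> multipartite_edges q r"
      then show "int q dvd (x - y)" unfolding multipartite_edges_def e using xy Nqr by auto
    qed
    finally show ?thesis by simp
  next
    case False
    have z: "(if {(V i h + g) mod int N, (V i h + es i ! h + g) mod int N} = e then 1 else 0) = (0::nat)"
      if "i \<in> I" "h < l" for i h g
    proof -
      have "(V i h + g) mod int N \<noteq> (V i h + es i ! h + g) mod int N"
      proof
        assume "(V i h + g) mod int N = (V i h + es i ! h + g) mod int N"
        then have "((V i h + g) + es i ! h) mod int N = (V i h + g) mod int N" by (simp add: algebra_simps)
        then have "es i ! h mod int N = ((V i h + g) mod int N - (V i h + g)) mod int N"
          using modeq2[OF Npos, of "(V i h + g) mod int N" "V i h + g" "es i ! h"] Npos by simp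
        also have "\<dots> = 0" by (simp add: mod_diff_left_eq)
        finally show False using nz[OF that] by simp
      qed
      then show ?thesis using False Npos by auto
    qed
    have "count (\<Sum>\<^sub># D) e = 0" unfolding count using z by simp
    moreover have "e \<notin> multipartite_edges q r" using False Nqr unfolding multipartite_edges_def by auto
    ultimately show ?thesis by simp
  qed
  show ?thesis
    unfolding cyclic_cycle_decomp_def Let_def
  proof (intro exI[of _ D] conjI ballI allI)
    fix C assume "C \<in># D"
    then obtain i g where "i \<in> I" "C = cycle_edges (sh g (xs i))" using mem by blast
    then show "\<exists>xs. length xs = l \<and> distinct xs \<and> set xs \<subseteq> {0..<int (q * r)} \<and> C = cycle_edges xs"
      using cyc Nqr by blast
  next
    fix e show "count (\<Sum>\<^sub># D) e = (if e \<in> multipartite_edges q r then lam else 0)" by (rule cnteq)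
  next
    fix g assume "g \<in> {0..<int (q * r)}"
    then show "image_mset (image_mset (image (\<lambda>x. (x + g) mod int (q * r)))) D = D" using inv Nqr by simp
  qed
qed



lemma card_filter_distinct:
  "distinct xs \<Longrightarrow> card {j \<in> set xs. Q j} = (\<Sum>h<length xs. if Q (xs ! h) then 1 else 0)"
proof (induct xs)
  case Nil then show ?case by simp
next
  case (Cons a xs)
  have "{j \<in> set (a # xs). Q j} = (if Q a then insert a {j \<in> set xs. Q j} else {j \<in> set xs. Q j})" by auto
  then have "card {j \<in> set (a # xs). Q j} = (if Q a then 1 else 0) + card {j \<in> set xs. Q j}"
    using Cons.prems by auto
  then show ?case using Cons by (simp del: sum.lessThan_Suc add: sum.lessThan_Suc_shift)
qed

lemma card_rows:
  assumes "\<And>i. i<m \<Longrightarrow> distinct (rx i) \<and> set (rx i) = row_cells n A i" "\<And>i. i<m \<Longrightarrow> length (rx i) = s"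
  shows "card {(i,j) \<in> filled_cells m n A. P (the (A i j))} = (\<Sum>i<m. \<Sum>h<s. if P (the (A i (rx i ! h))) then 1 else 0)"
proof -
  have "{(i,j) \<in> filled_cells m n A. P (the (A i j))} = (\<Union>i\<in>{..<m}. Pair i ` {j \<in> set (rx i). P (the (A i j))})"
    unfolding filled_cells_def using assms(1) unfolding row_cells_def by auto
  note eqU = this
  have "card {(i,j) \<in> filled_cells m n A. P (the (A i j))} = (\<Sum>i<m. card (Pair i ` {j \<in> set (rx i). P (the (A i j))}))"
    apply (subst eqU)
    apply (rule card_UN_disjoint)
      apply auto
    done
  also have "\<dots> = (\<Sum>i<m. card {j \<in> set (rx i). P (the (A i j))})"
    by (intro sum.cong refl card_image) (simp add: inj_on_def)
  also have "\<dots> = (\<Sum>i<m. \<Sum>h<s. if P (the (A i (rx i ! h))) then 1 else 0)"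
  proof (intro sum.cong refl)
    fix x assume "x \<in> {..<m}"
    then show "card {j \<in> set (rx x). P (the (A x j)) } = (\<Sum>h<s. if P (the (A x (rx x ! h))) then 1 else 0)"
      using card_filter_distinct[of "rx x" "\<lambda>j. P (the (A x j))"] assms(1)[of x] assms(2)[of x] by simp
  qed
  finally show ?thesis .
qed

lemma card_cols:
  assumes "\<And>j. j<n \<Longrightarrow> distinct (cx j) \<and> set (cx j) = col_cells m A j" "\<And>j. j<n \<Longrightarrow> length (cx j) = k"
  shows "card {(i,j) \<in> filled_cells m n A. P (the (A i j))} = (\<Sum>j<n. \<Sum>h<k. if P (the (A (cx j ! h) j)) then 1 else 0)"
proof -
  have "{(i,j) \<in> filled_cells m n A. P (the (A i j))} = (\<Union>j\<in>{..<n}. (\<lambda>i. (i,j)) ` {i \<in> set (cx j). P (the (A i j))})"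
    unfolding filled_cells_def using assms(1) unfolding col_cells_def by auto
  note eqU = this
  have "card {(i,j) \<in> filled_cells m n A. P (the (A i j))} = (\<Sum>j<n. card ((\<lambda>i. (i,j)) ` {i \<in> set (cx j). P (the (A i j))}))"
    apply (subst eqU)
    apply (rule card_UN_disjoint)
      apply auto
    done
  also have "\<dots> = (\<Sum>j<n. card {i \<in> set (cx j). P (the (A i j))})"
    by (intro sum.cong refl card_image) (simp add: inj_on_def)
  also have "\<dots> = (\<Sum>j<n. \<Sum>h<k. if P (the (A (cx j ! h) j)) then 1 else 0)"
  proof (intro sum.cong refl)
    fix x assume "x \<in> {..<n}"
    then show "card {i \<in> set (cx x). P (the (A i x)) } = (\<Sum>h<k. if P (the (A (cx x ! h) x)) then 1 else 0)"
      using card_filter_distinct[of "cx x" "\<lambda>i. P (the (A i x))"] assms(1)[of x] assms(2)[of x] by simp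
  qed
  finally show ?thesis .
qed


theorem proposition3:
  fixes m n s k lam t :: nat and A :: "nat \<Rightarrow> nat \<Rightarrow> int option"
  assumes "m > 0" "n > 0" "s > 0" "k > 0" "lam > 0" "t > 0"
    and "lam dvd 2 * n * k" and "t dvd 2 * n * k div lam"
    and "is_heffter lam t m n s k A"
    and "is_simple_array lam t m n k A"
  shows "(\<exists>D. cyclic_cycle_decomp s lam (2 * m * s div (lam * t) + 1) t D) \<and>
         (\<exists>D. cyclic_cycle_decomp k lam (2 * n * k div (lam * t) + 1) t D)"
proof -
  define v where "v = 2 * n * k div lam + t"
  define q where "q = 2 * n * k div (lam * t) + 1"
  have qt: "v = q * t"
  proof -
    have "2 * n * k div (lam * t) = 2 * n * k div lam div t" by (simp add: div_mult2_eq)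
    then have "2 * n * k div (lam * t) * t = 2 * n * k div lam" using assms(8) by simp
    then show ?thesis unfolding v_def q_def by (simp add: algebra_simps)
  qed
  have vpos: "v > 0" unfolding v_def using assms by simp
  have vt: "v div t = q" using qt assms(6) by simp
  have H: "(\<forall>i < m. card (row_cells n A i) = s)"
     "(\<forall>j < n. card (col_cells m A j) = k)"
     "(\<forall>y. 0 \<le> y \<and> y < int v \<longrightarrow>
         card {(i, j) \<in> filled_cells m n A. the (A i j) mod int v = y}
       + card {(i, j) \<in> filled_cells m n A. (- the (A i j)) mod int v = y}
         = (if y \<in> subgrp_J v t then 0 else lam))"
     "(\<forall>i < m. (\<Sum>j \<in> row_cells n A i. the (A i j)) mod int v = 0)"
     "(\<forall>j < n. (\<Sum>i \<in> col_cells m A j. the (A i j)) mod int v = 0)"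
    using assms(9) unfolding is_heffter_def Let_def v_def by auto
  have S: "\<forall>i < m. \<exists>xs. distinct xs \<and> set xs = row_cells n A i \<and> simple_seq v (map (\<lambda>j. the (A i j)) xs)"
     "\<forall>j < n. \<exists>xs. distinct xs \<and> set xs = col_cells m A j \<and> simple_seq v (map (\<lambda>i. the (A i j)) xs)"
    using assms(10) unfolding is_simple_array_def Let_def v_def by auto
  obtain rx where rx: "\<And>i. i < m \<Longrightarrow> distinct (rx i) \<and> set (rx i) = row_cells n A i \<and> simple_seq v (map (\<lambda>j. the (A i j)) (rx i))"
    using S(1) by metis
  obtain cx where cx: "\<And>j. j < n \<Longrightarrow> distinct (cx j) \<and> set (cx j) = col_cells m A j \<and> simple_seq v (map (\<lambda>i. the (A i j)) (cx j))"
    using S(2) by metis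
  have rlen: "length (rx i) = s" if "i < m" for i using rx[OF that] H(1) that distinct_card by metis
  have clen: "length (cx j) = k" if "j < n" for j using cx[OF that] H(2) that distinct_card by metis
  have Jiff: "(y \<in> subgrp_J v t) = (int q dvd y)" if "0 \<le> y" "y < int v" for y
    using that vt unfolding subgrp_J_def by simp
  have cardrow: "card (filled_cells m n A) = m * s"
    using card_rows[of m rx n A s "\<lambda>_. True"] rx rlen by simp
  have cardcol: "card (filled_cells m n A) = n * k"
    using card_cols[of n cx m A k "\<lambda>_. True"] cx clen by simp
  have msnk: "2 * m * s = 2 * n * k" using cardrow cardcol by simp
  have cnt: "(\<Sum>i<m. \<Sum>h<s. (if the (A i (rx i ! h)) mod int v = d then 1 else 0) + (if (- the (A i (rx i ! h))) mod int v = d then 1 else 0)) = (if int q dvd d then 0 else lam)"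
    if "0 \<le> d" "d < int v" for d
    using H(3)[rule_format, of d] that card_rows[of m rx n A s "\<lambda>a. a mod int v = d"] card_rows[of m rx n A s "\<lambda>a. (- a) mod int v = d"]
      rx rlen Jiff[OF that] by (simp add: sum.distrib)
  have cntc: "(\<Sum>j<n. \<Sum>h<k. (if the (A (cx j ! h) j) mod int v = d then 1 else 0) + (if (- the (A (cx j ! h) j)) mod int v = d then 1 else 0)) = (if int q dvd d then 0 else lam)"
    if "0 \<le> d" "d < int v" for d
    using H(3)[rule_format, of d] that card_cols[of n cx m A k "\<lambda>a. a mod int v = d"] card_cols[of n cx m A k "\<lambda>a. (- a) mod int v = d"]
      cx clen Jiff[OF that] by (simp add: sum.distrib)
  have D1: "\<exists>D. cyclic_cycle_decomp s lam q t D"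
  proof (rule general[of v q t "{..<m}" "\<lambda>i. map (\<lambda>j. the (A i j)) (rx i)" s lam])
    show "v = q * t" by (rule qt)
    show "0 < v" by (rule vpos)
    show "finite {..<m}" by simp
  next
    fix i assume "i \<in> {..<m}"
    then show "length (map (\<lambda>j. the (A i j)) (rx i)) = s" using rlen by simp
  next
    fix i assume "i \<in> {..<m}"
    then show "simple_seq v (map (\<lambda>j. the (A i j)) (rx i))" using rx by simp
  next
    fix i assume i: "i \<in> {..<m}"
    then show "sum_list (map (\<lambda>j. the (A i j)) (rx i)) mod int v = 0"
      using rx[of i] H(4) by (simp add: sum_list_distinct_conv_sum_set)
  next
    fix d :: int assume dd: "0 \<le> d" "d < int v"
    have "(\<Sum>i\<in>{..<m}. \<Sum>h<s. (if map (\<lambda>j. the (A i j)) (rx i) ! h mod int v = d then 1 else 0) + (if (- (map (\<lambda>j. the (A i j)) (rx i) ! h)) mod int v = d then 1 else (0::nat))) =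
      (\<Sum>i<m. \<Sum>h<s. (if the (A i (rx i ! h)) mod int v = d then 1 else 0) + (if (- the (A i (rx i ! h))) mod int v = d then 1 else 0))"
      by (intro sum.cong refl) (simp add: rlen)
    then show "(\<Sum>i\<in>{..<m}. \<Sum>h<s. (if map (\<lambda>j. the (A i j)) (rx i) ! h mod int v = d then 1 else 0) + (if (- (map (\<lambda>j. the (A i j)) (rx i) ! h)) mod int v = d then 1 else 0)) = (if int q dvd d then 0 else lam)"
      using cnt[OF dd] by simp
  qed
  have D2: "\<exists>D. cyclic_cycle_decomp k lam q t D"
  proof (rule general[of v q t "{..<n}" "\<lambda>j. map (\<lambda>i. the (A i j)) (cx j)" k lam])
    show "v = q * t" by (rule qt)
    show "0 < v" by (rule vpos)
    show "finite {..<n}" by simp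
  next
    fix j assume "j \<in> {..<n}"
    then show "length (map (\<lambda>i. the (A i j)) (cx j)) = k" using clen by simp
  next
    fix j assume "j \<in> {..<n}"
    then show "simple_seq v (map (\<lambda>i. the (A i j)) (cx j))" using cx by simp
  next
    fix j assume i: "j \<in> {..<n}"
    then show "sum_list (map (\<lambda>i. the (A i j)) (cx j)) mod int v = 0"
      using cx[of j] H(5) by (simp add: sum_list_distinct_conv_sum_set)
  next
    fix d :: int assume dd: "0 \<le> d" "d < int v"
    have "(\<Sum>j\<in>{..<n}. \<Sum>h<k. (if map (\<lambda>i. the (A i j)) (cx j) ! h mod int v = d then 1 else 0) + (if (- (map (\<lambda>i. the (A i j)) (cx j) ! h)) mod int v = d then 1 else (0::nat))) =
      (\<Sum>j<n. \<Sum>h<k. (if the (A (cx j ! h) j) mod int v = d then 1 else 0) + (if (- the (A (cx j ! h) j)) mod int v = d then 1 else 0))"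
      by (intro sum.cong refl) (simp add: clen)
    then show "(\<Sum>j\<in>{..<n}. \<Sum>h<k. (if map (\<lambda>i. the (A i j)) (cx j) ! h mod int v = d then 1 else 0) + (if (- (map (\<lambda>i. the (A i j)) (cx j) ! h)) mod int v = d then 1 else 0)) = (if int q dvd d then 0 else lam)"
      using cntc[OF dd] by simp
  qed
  have e: "2 * m * s div (lam * t) + 1 = q" unfolding q_def msnk ..
  have e2: "2 * n * k div (lam * t) + 1 = q" unfolding q_def ..
  show ?thesis unfolding e e2 using D1 D2 by blast
qed


end
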